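(* Let $n\ge1$, let $V$ be a real symmetric positive-semidefinite $2n\times2n$ matrix, let $H$ be a real symmetric positive-definite $2n\times 2n$ matrix, and let $G$ be either $SL(2n)$ or $Sp(2n)$. Then \[ \inf_{X\in G}\operatorname{tr}(XVX^TH)=\lim_{\epsilon\to0^+}\ \inf_{X\in G}\operatorname{tr}\big(X(V+\epsilon\mathbb{I}_{2n})X^TH\big). \]
   Context: $SL(2n)$ is the group of real $2n\times2n$ matrices of determinant $1$; $Sp(2n)=\{S\in\mathbb{R}^{2n\times 2n}: S^TJS=J\}$ with $J=\begin{bmatrix}0 & \mathbb{I}_n\\ -\mathbb{I}_n & 0\end{bmatrix}$. *)

theory Defs
  imports "HOL-Analysis.Analysis"
begin

text \<open>Matrices of size 2n x 2n are indexed by the type 'n + 'n, where CARD('n) = n;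
  the first block of n coordinates is Inl, the second is Inr.\<close>

type_synonym 'n sqmat = "real ^ ('n + 'n) ^ ('n + 'n)"

definition symJ :: "'n::finite sqmat" where
  "symJ = (\<chi> i j. (case (i, j) of
      (Inl a, Inr b) \<Rightarrow> (if a = b then 1 else 0)
    | (Inr a, Inl b) \<Rightarrow> (if a = b then -1 else 0)
    | _ \<Rightarrow> 0))"

definition SL_grp :: "'n::finite sqmat set" where
  "SL_grp = {S. det S = 1}"

definition Sp_grp :: "'n::finite sqmat set" where
  "Sp_grp = {S. transpose S ** symJ ** S = symJ}"

definition psd_mat :: "'n::finite sqmat \<Rightarrow> bool" where
  "psd_mat A \<longleftrightarrow> transpose A = A \<and> (\<forall>x. 0 \<le> x \<bullet> (A *v x))"

definition pd_mat :: "'n::finite sqmat \<Rightarrow> bool" where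
  "pd_mat A \<longleftrightarrow> transpose A = A \<and> (\<forall>x. x \<noteq> 0 \<longrightarrow> 0 < x \<bullet> (A *v x))"

end

theory Submission
  imports Defs
begin

definition QF :: "('m::finite \<Rightarrow> 'm \<Rightarrow> real) \<Rightarrow> ('m \<Rightarrow> real) \<Rightarrow> real" where
  "QF M x = (\<Sum>i\<in>UNIV. \<Sum>j\<in>UNIV. x i * M i j * x j)"

lemma delta_mult: "(\<Sum>i\<in>(UNIV::'m::finite set). (if i = a then t else 0) * f i) = t * (f a :: real)"
proof -
  have "(\<Sum>i\<in>(UNIV::'m set). (if i = a then t else 0) * f i) = (\<Sum>i\<in>UNIV. if i = a then t * f i else 0)"
    by (rule sum.cong) auto
  also have "\<dots> = t * f a" by simp
  finally show ?thesis .
qed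

lemma delta_mult': "(\<Sum>i\<in>(UNIV::'m::finite set). f i * (if i = a then t else 0)) = (f a :: real) * t"
  using delta_mult[of a t f] by (simp add: mult.commute)

lemma QF_shift:
  fixes M :: "'m::finite \<Rightarrow> 'm \<Rightarrow> real"
  assumes sym: "\<And>i j. M i j = M j i"
  shows "QF M (\<lambda>i. x i + (if i = a then t else 0)) = QF M x + 2 * t * (\<Sum>j\<in>UNIV. M a j * x j) + t^2 * M a a"
proof -
  have "QF M (\<lambda>i. x i + (if i = a then t else 0)) =
     QF M x + (\<Sum>i\<in>UNIV. \<Sum>j\<in>UNIV. x i * M i j * (if j = a then t else 0))
      + (\<Sum>i\<in>UNIV. \<Sum>j\<in>UNIV. (if i = a then t else 0) * M i j * x j)
      + (\<Sum>i\<in>UNIV. \<Sum>j\<in>UNIV. (if i = a then t else 0) * M i j * (if j = a then t else 0))"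
    unfolding QF_def by (simp add: algebra_simps sum.distrib)
  also have "(\<Sum>i\<in>UNIV. \<Sum>j\<in>UNIV. x i * M i j * (if j = a then t else 0)) = t * (\<Sum>j\<in>UNIV. M a j * x j)"
  proof -
    have "(\<Sum>i\<in>UNIV. \<Sum>j\<in>UNIV. x i * M i j * (if j = a then t else 0)) = (\<Sum>i\<in>UNIV. x i * M i a * t)"
      by (simp only: delta_mult')
    also have "\<dots> = t * (\<Sum>j\<in>UNIV. M a j * x j)"
      by (simp add: sum_distrib_left sym mult_ac)
    finally show ?thesis .
  qed
  also have "(\<Sum>i\<in>UNIV. \<Sum>j\<in>UNIV. (if i = a then t else 0) * M i j * x j) = t * (\<Sum>j\<in>UNIV. M a j * x j)"
  proof -
    have "(\<Sum>i\<in>UNIV. \<Sum>j\<in>UNIV. (if i = a then t else 0) * M i j * x j)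
       = (\<Sum>i\<in>UNIV. (if i = a then t else 0) * (\<Sum>j\<in>UNIV. M i j * x j))"
      by (simp add: sum_distrib_left mult.assoc)
    also have "\<dots> = t * (\<Sum>j\<in>UNIV. M a j * x j)"
      by (rule delta_mult)
    finally show ?thesis .
  qed
  also have "(\<Sum>i\<in>UNIV. \<Sum>j\<in>UNIV. (if i = a then t else 0) * M i j * (if j = a then t else 0)) = t^2 * M a a"
  proof -
    have "(\<Sum>i\<in>UNIV. \<Sum>j\<in>UNIV. (if i = a then t else 0) * M i j * (if j = a then t else 0))
      = (\<Sum>i\<in>UNIV. (if i = a then t else 0) * M i a * t)"
      by (simp only: delta_mult')
    also have "\<dots> = (\<Sum>i\<in>UNIV. (if i = a then t else 0) * (M i a * t))"
      by (simp add: mult.assoc)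
    also have "\<dots> = t^2 * M a a" by (subst delta_mult) (simp add: power2_eq_square)
    finally show ?thesis .
  qed
  finally show ?thesis by simp
qed

lemma QF_0: "QF M (\<lambda>i. 0 + (if i = a then t else 0)) = t^2 * M a a"
proof -
  have "QF M (\<lambda>i. 0 + (if i = a then t else 0)) = (\<Sum>i\<in>UNIV. (if i = a then t else 0) * (M i a * t))"
    unfolding QF_def add_0_left delta_mult' by (simp only: mult.assoc)
  also have "\<dots> = t^2 * M a a" by (subst delta_mult) (simp add: power2_eq_square)
  finally show ?thesis .
qed

lemma QF_rank1:
  fixes M :: "'m::finite \<Rightarrow> 'm \<Rightarrow> real"
  shows
  "(\<Sum>i\<in>UNIV. \<Sum>j\<in>UNIV. x i * M i a * M a j * x j) =
   (\<Sum>i\<in>UNIV. x i * M i a) * (\<Sum>j\<in>UNIV. M a j * x j)"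
proof -
  have "(\<Sum>i\<in>UNIV. x i * M i a) * (\<Sum>j\<in>UNIV. M a j * x j) =
    (\<Sum>i\<in>UNIV. \<Sum>j\<in>UNIV. (x i * M i a) * (M a j * x j))"
    by (rule sum_product)
  then show ?thesis by (simp add: mult.assoc)
qed

lemma psd_tr_induct:
  fixes V :: "'m::finite \<Rightarrow> 'm \<Rightarrow> real"
  assumes V: "\<And>x. 0 \<le> QF V x"
  shows "finite S \<Longrightarrow> (\<forall>i j. M i j = M j i) \<Longrightarrow> (\<forall>x. 0 \<le> QF M x)
    \<Longrightarrow> (\<forall>i j. i \<notin> S \<or> j \<notin> S \<longrightarrow> M i j = 0)
    \<Longrightarrow> 0 \<le> (\<Sum>i\<in>UNIV. \<Sum>j\<in>UNIV. V i j * M j i)"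
proof (induction S arbitrary: M rule: finite_induct)
  case empty
  then show ?case by simp
next
  case (insert a S)
  have sym: "\<And>i j. M i j = M j i" using insert.prems by blast
  have psd: "\<And>x. 0 \<le> QF M x" using insert.prems by blast
  have supp: "\<And>i j. i \<notin> insert a S \<or> j \<notin> insert a S \<Longrightarrow> M i j = 0" using insert.prems by blast
  define d where "d = M a a"
  have d0: "0 \<le> d" using psd[of "\<lambda>i. 0 + (if i = a then 1 else 0)"] unfolding QF_0 d_def by simp
  show ?case
  proof (cases "d = 0")
    case True
    have row: "M a j = 0" for j
    proof (rule ccontr)
      assume b: "M a j \<noteq> 0"
      then have "j \<noteq> a" using True d_def by auto
      define t where "t = - (M j j + 1) / (2 * M a j)"
      have "QF M (\<lambda>i. (0 + (if i = j then 1 else 0)) + (if i = a then t else 0))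
          = M j j + 2 * t * (\<Sum>k\<in>UNIV. M a k * (0 + (if k = j then 1 else 0)))"
        using QF_shift[of M "\<lambda>i. 0 + (if i = j then 1 else 0)" a t] sym QF_0[of M j 1] True d_def
        by simp
      also have "(\<Sum>k\<in>UNIV. M a k * (0 + (if k = j then 1 else 0))) = M a j"
        by (simp only: add_0_left delta_mult' mult_1_right)
      also have "M j j + 2 * t * M a j = -1" using b unfolding t_def by (simp add: field_simps)
      finally show False using psd[of "\<lambda>i. (0 + (if i = j then 1 else 0)) + (if i = a then t else 0)"] by simp
    qed
    have supp': "\<forall>i j. i \<notin> S \<or> j \<notin> S \<longrightarrow> M i j = 0"
    proof (intro allI impI)
      fix i j assume h: "i \<notin> S \<or> j \<notin> S"
      show "M i j = 0"
      proof (cases "i = a \<or> j = a")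
        case True
        then show ?thesis using row sym by metis
      next
        case False
        then show ?thesis using h supp by auto
      qed
    qed
    show ?thesis using insert.IH[of M] sym psd supp' by blast
  next
    case False
    then have dpos: "d > 0" using d0 by simp
    define M' where "M' i j = M i j - M i a * M a j / d" for i j
    have sym': "\<forall>i j. M' i j = M' j i" unfolding M'_def using sym by (simp add: mult.commute)
    have qf': "QF M' x = QF M x - (\<Sum>j\<in>UNIV. M a j * x j)^2 / d" for x
    proof -
      have "QF M' x = QF M x - (\<Sum>i\<in>UNIV. \<Sum>j\<in>UNIV. x i * M i a * M a j * x j) / d"
        unfolding QF_def M'_def
        by (simp add: algebra_simps sum_subtractf sum_divide_distrib)
      also have "(\<Sum>i\<in>UNIV. \<Sum>j\<in>UNIV. x i * M i a * M a j * x j) = (\<Sum>j\<in>UNIV. M a j * x j)^2"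
        unfolding QF_rank1 power2_eq_square using sym by (simp add: mult.commute)
      finally show ?thesis .
    qed
    have psd': "\<forall>x. 0 \<le> QF M' x"
    proof
      fix x
      define c where "c = (\<Sum>j\<in>UNIV. M a j * x j)"
      have "0 \<le> QF M (\<lambda>i. x i + (if i = a then - c / d else 0))" by (rule psd)
      also have "\<dots> = QF M x - c^2 / d"
        unfolding QF_shift[of M, OF sym] c_def[symmetric] d_def[symmetric] using dpos
        by (simp add: field_simps power2_eq_square)
      finally show "0 \<le> QF M' x" unfolding qf' c_def .
    qed
    have supp'': "\<forall>i j. i \<notin> S \<or> j \<notin> S \<longrightarrow> M' i j = 0"
    proof (intro allI impI)
      fix i j assume h: "i \<notin> S \<or> j \<notin> S"
      show "M' i j = 0"
      proof (cases "i = a \<or> j = a")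
        case True
        then show ?thesis unfolding M'_def d_def using dpos d_def sym by auto
      next
        case False
        then have "i \<notin> insert a S \<or> j \<notin> insert a S" using h by auto
        then have "M i j = 0" "M i a * M a j = 0" using supp[of i j] supp[of i a] supp[of a j] by auto
        then show ?thesis unfolding M'_def by simp
      qed
    qed
    have IH: "0 \<le> (\<Sum>i\<in>UNIV. \<Sum>j\<in>UNIV. V i j * M' j i)"
      using insert.IH[of M'] sym' psd' supp'' by blast
    have r1: "0 \<le> (\<Sum>i\<in>UNIV. \<Sum>j\<in>UNIV. V i j * (M j a * M a i)) / d"
    proof -
      have "(\<Sum>i\<in>UNIV. \<Sum>j\<in>UNIV. V i j * (M j a * M a i)) = QF V (\<lambda>i. M a i)"
        unfolding QF_def using sym by (intro sum.cong refl) (simp add: mult_ac)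
      then show ?thesis using V dpos by simp
    qed
    have "(\<Sum>i\<in>UNIV. \<Sum>j\<in>UNIV. V i j * M j i) =
       (\<Sum>i\<in>UNIV. \<Sum>j\<in>UNIV. V i j * M' j i) + (\<Sum>i\<in>UNIV. \<Sum>j\<in>UNIV. V i j * (M j a * M a i)) / d"
      unfolding M'_def by (simp add: algebra_simps sum.distrib sum_subtractf sum_divide_distrib)
    then show ?thesis using IH r1 by simp
  qed
qed


lemma QF_vec:
  fixes A :: "real^'m::finite^'m"
  shows "QF (\<lambda>i j. A$i$j) (\<lambda>i. y$i) = y \<bullet> (A *v y)"
  unfolding QF_def inner_vec_def matrix_vector_mult_def by (simp add: sum_distrib_left mult_ac)

lemma trace_mult_sum:
  fixes A B :: "real^'m::finite^'m"
  shows "trace (A ** B) = (\<Sum>i\<in>UNIV. \<Sum>j\<in>UNIV. A$i$j * B$j$i)"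
  unfolding trace_def matrix_matrix_mult_def by simp

lemma tr_nonneg:
  fixes V B :: "real^'m::finite^'m"
  assumes "\<forall>x. 0 \<le> x \<bullet> (V *v x)" "transpose B = B" "\<forall>x. 0 \<le> x \<bullet> (B *v x)"
  shows "0 \<le> trace (V ** B)"
proof -
  have V: "0 \<le> QF (\<lambda>i j. V$i$j) x" for x
    using assms(1)[rule_format, of "\<chi> i. x i"] QF_vec[of V "\<chi> i. x i"] by simp
  have B: "\<forall>x. 0 \<le> QF (\<lambda>i j. B$i$j) x"
  proof
    fix x :: "'m \<Rightarrow> real"
    show "0 \<le> QF (\<lambda>i j. B$i$j) x"
      using assms(3)[rule_format, of "\<chi> i. x i"] QF_vec[of B "\<chi> i. x i"] by simp
  qed
  have sym: "\<forall>i j. B$i$j = B$j$i"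
  proof (intro allI)
    fix i j
    have "transpose B $ i $ j = B $ i $ j" using assms(2) by simp
    then show "B$i$j = B$j$i" unfolding transpose_def by simp
  qed
  have "0 \<le> (\<Sum>i\<in>UNIV. \<Sum>j\<in>UNIV. V$i$j * B$j$i)"
    by (rule psd_tr_induct[of "\<lambda>i j. V$i$j" UNIV "\<lambda>i j. B$i$j", OF V finite_class.finite_UNIV sym B]) simp
  then show ?thesis by (simp add: trace_mult_sum)
qed

lemma XtHX:
  fixes X H :: "real^'m::finite^'m"
  assumes "transpose H = H" "\<forall>x. 0 \<le> x \<bullet> (H *v x)"
  shows "transpose (transpose X ** H ** X) = transpose X ** H ** X"
    "\<forall>x. 0 \<le> x \<bullet> ((transpose X ** H ** X) *v x)"
proof -
  show "transpose (transpose X ** H ** X) = transpose X ** H ** X"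
    using assms(1) by (simp add: matrix_transpose_mul matrix_mul_assoc)
  show "\<forall>x. 0 \<le> x \<bullet> ((transpose X ** H ** X) *v x)"
  proof
    fix x :: "real^'m"
    have "x \<bullet> ((transpose X ** H ** X) *v x) = x \<bullet> ((H *v (X *v x)) v* X)"
      by (simp add: matrix_vector_mul_assoc[symmetric])
    also have "\<dots> = ((H *v (X *v x)) v* X) \<bullet> x" by (rule inner_commute)
    also have "\<dots> = (H *v (X *v x)) \<bullet> (X *v x)" by (rule dot_lmul_matrix)
    also have "\<dots> = (X *v x) \<bullet> (H *v (X *v x))" by (rule inner_commute)
    finally show "0 \<le> x \<bullet> ((transpose X ** H ** X) *v x)" using assms(2) by simp
  qed
qed

lemma radd: "((A::real^'m::finite^'m) + B) ** C = A ** C + B ** C"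
  by (simp add: matrix_matrix_mult_def vec_eq_iff sum.distrib ring_distribs)

lemma mscal1: "(A::real^'m::finite^'m) ** (c *\<^sub>R B) = c *\<^sub>R (A ** B)"
  by (simp add: matrix_matrix_mult_def vec_eq_iff sum_distrib_left mult_ac)

lemma mscal2: "(c *\<^sub>R (A::real^'m::finite^'m)) ** B = c *\<^sub>R (A ** B)"
  by (simp add: matrix_matrix_mult_def vec_eq_iff sum_distrib_left mult_ac)

lemma trace_scaleR: "trace (c *\<^sub>R (A::real^'m::finite^'m)) = c * trace A"
  by (simp add: trace_def sum_distrib_left)

lemma g_nonneg:
  fixes X V H :: "real^'m::finite^'m"
  assumes "\<forall>x. 0 \<le> x \<bullet> (V *v x)" "transpose H = H" "\<forall>x. 0 \<le> x \<bullet> (H *v x)"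
  shows "0 \<le> trace (X ** V ** transpose X ** H)"
proof -
  have "trace (X ** V ** transpose X ** H) = trace (X ** (V ** transpose X ** H))"
    by (simp add: matrix_mul_assoc)
  also have "\<dots> = trace ((V ** transpose X ** H) ** X)" by (rule trace_mul_sym)
  also have "\<dots> = trace (V ** (transpose X ** H ** X))" by (simp add: matrix_mul_assoc)
  finally show ?thesis using tr_nonneg[OF assms(1) XtHX[OF assms(2,3)]] by simp
qed

lemma lin:
  fixes X V H :: "real^'m::finite^'m"
  shows "trace (X ** (V + e *\<^sub>R mat 1) ** transpose X ** H)
     = trace (X ** V ** transpose X ** H) + e * trace (X ** mat 1 ** transpose X ** H)"
proof -
  have "X ** (V + e *\<^sub>R mat 1) ** transpose X ** H
     = X ** V ** transpose X ** H + e *\<^sub>R (X ** mat 1 ** transpose X ** H)"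
    by (simp only: matrix_add_ldistrib radd mscal1 mscal2)
  then show ?thesis by (simp add: trace_add trace_scaleR)
qed

theorem mainTheorem4:
  fixes V H :: "'n::finite sqmat" and G :: "'n sqmat set"
  assumes "psd_mat V" and "pd_mat H"
    and "G = SL_grp \<or> G = Sp_grp"
  shows "((\<lambda>\<epsilon>::real. Inf {trace (X ** (V + \<epsilon> *\<^sub>R mat 1) ** transpose X ** H) | X. X \<in> G})
          \<longlongrightarrow> Inf {trace (X ** V ** transpose X ** H) | X. X \<in> G}) (at_right 0)"
proof -
  define g where "g X = trace (X ** V ** transpose X ** H)" for X :: "'n sqmat"
  define h where "h X = trace (X ** mat 1 ** transpose X ** H)" for X :: "'n sqmat"
  have Vp: "\<forall>x. 0 \<le> x \<bullet> (V *v x)" using assms(1) unfolding psd_mat_def by blast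
  have Hs: "transpose H = H" using assms(2) unfolding pd_mat_def by blast
  have Hp: "\<forall>x. 0 \<le> x \<bullet> (H *v x)"
  proof
    fix x :: "real^('n+'n)"
    show "0 \<le> x \<bullet> (H *v x)"
      using assms(2) unfolding pd_mat_def by (cases "x = 0") (auto intro: less_imp_le)
  qed
  have Ip: "\<forall>x. 0 \<le> x \<bullet> ((mat 1 :: 'n sqmat) *v x)" by simp
  have gnn: "0 \<le> g X" for X unfolding g_def by (rule g_nonneg[OF Vp Hs Hp])
  have hnn: "0 \<le> h X" for X unfolding h_def by (rule g_nonneg[OF Ip Hs Hp])
  have G1: "mat 1 \<in> G"
    using assms(3) unfolding SL_grp_def Sp_grp_def by auto
  then have Gne: "G \<noteq> {}" by blast
  have set1: "{trace (X ** (V + e *\<^sub>R mat 1) ** transpose X ** H) | X. X \<in> G} = (\<lambda>X. g X + e * h X) ` G" for e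
    unfolding g_def h_def lin by blast
  have set0: "{trace (X ** V ** transpose X ** H) | X. X \<in> G} = g ` G"
    unfolding g_def by blast
  have bddg: "bdd_below (g ` G)" using gnn by (intro bdd_belowI2) 
  have bdde: "bdd_below ((\<lambda>X. g X + e * h X) ` G)" if "0 \<le> e" for e
    using gnn hnn that by (intro bdd_belowI2[where m=0]) simp
  define m where "m = Inf (g ` G)"
  have "((\<lambda>e::real. Inf ((\<lambda>X. g X + e * h X) ` G)) \<longlongrightarrow> m) (at_right 0)"
  proof (rule order_tendstoI)
    fix a assume "a < m"
    have "eventually (\<lambda>e::real. e > 0) (at_right 0)" by (rule eventually_at_right_less)
    then show "eventually (\<lambda>e. a < Inf ((\<lambda>X. g X + e * h X) ` G)) (at_right 0)"
    proof (rule eventually_mono)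
      fix e :: real assume e: "e > 0"
      have "m \<le> Inf ((\<lambda>X. g X + e * h X) ` G)"
      proof (rule cINF_greatest[OF Gne])
        fix X assume "X \<in> G"
        then have "m \<le> g X" unfolding m_def by (rule cINF_lower[OF bddg])
        then show "m \<le> g X + e * h X" using hnn[of X] e by (simp add: add_increasing2)
      qed
      then show "a < Inf ((\<lambda>X. g X + e * h X) ` G)" using \<open>a < m\<close> by simp
    qed
  next
    fix b assume "m < b"
    then obtain X where X: "X \<in> G" "g X < b"
      unfolding m_def using cINF_less_iff[OF Gne bddg] by blast
    define c where "c = (b - g X) / (h X + 1)"
    have cpos: "c > 0" unfolding c_def using X hnn[of X] by simp
    show "eventually (\<lambda>e. Inf ((\<lambda>X. g X + e * h X) ` G) < b) (at_right 0)"
      unfolding eventually_at_right_field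
    proof (intro exI[of _ c] conjI allI impI)
      show "(0::real) < c" by (rule cpos)
      fix e :: real assume e: "0 < e" "e < c"
      have "Inf ((\<lambda>X. g X + e * h X) ` G) \<le> g X + e * h X"
        using bdde[of e] e X(1) by (intro cINF_lower) auto
      also have "e * h X \<le> e * (h X + 1)" using e by simp
      also have "e * (h X + 1) < c * (h X + 1)" using e hnn[of X]
        by (intro mult_strict_right_mono) auto
      also have "c * (h X + 1) = b - g X" unfolding c_def using hnn[of X] by simp
      finally show "Inf ((\<lambda>X. g X + e * h X) ` G) < b" by simp
    qed
  qed
  then show ?thesis unfolding set1 set0 m_def .
qed

end
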